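(* Let $f_0,g_0\in\mathbb{C}[z]$ be polynomials of length $\ell$ with nonzero constant coefficients, let $t$ be an element of the group $G_{\ell,\ell}=\langle s,n,h,r\rangle$ of permutations of $P_\ell\times P_\ell$, and let $(a_0,b_0)=t(f_0,g_0)$. Let $\sigma_0,\sigma_1,\ldots$ be a sequence in $\{-1,1\}$, and for $q\in\{f,g,a,b\}$ define $q_{m+1}(z)=q_m(z)+\sigma_m z^{\operatorname{len} q_m}q_m^\dagger(-z)$ for all $m\ge0$. Then \[ \lim_{m\to\infty}\mathrm{CDF}(a_m,b_m)=\lim_{m\to\infty}\mathrm{CDF}(f_m,g_m)\quad\text{and}\quad\lim_{m\to\infty}\mathrm{PSC}(a_m,b_m)=\lim_{m\to\infty}\mathrm{PSC}(f_m,g_m). \]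
   Context: For a polynomial $a(z)=a_0+\cdots+a_dz^d$ of degree $d$, $\operatorname{len}a=1+d$ and $a^\dagger(z)=\overline{a_d}+\overline{a_{d-1}}z+\cdots+\overline{a_0}z^d$; $q^\dagger(-z)$ means $q^\dagger$ evaluated at $-z$; $\widetilde{a}(z)=a(-z)$. $P_\ell$ is the set of polynomials of length $\ell$ in $\mathbb{C}[z]$ with nonzero constant coefficient, and $G_{\ell,\ell}$ is the group of permutations of $P_\ell\times P_\ell$ generated by $s(f,g)=(g,f)$, $n(f,g)=(-f,g)$, $h(f,g)=(\widetilde{f},\widetilde{g})$, $r(f,g)=(f^\dagger,g^\dagger)$. Polynomials are identified with coefficient sequences. For sequences $f,g$ of equal length, $C_{f,g}(s)=\sum_jf_{j+s}\overline{g_j}$; $\mathrm{CDF}(f,g)=\sum_s|C_{f,g}(s)|^2/(|C_{f,f}(0)||C_{g,g}(0)|)$ (equal to $\|fg\|_2^2/(\|f\|_2^2\|g\|_2^2)$ with $\|a\|_2^2=\frac{1}{2\pi}\int_0^{2\pi}|a(e^{i\theta})|^2d\theta$); $\mathrm{ADF}(f)=\mathrm{CDF}(f,f)-1$; and $\mathrm{PSC}(f,g)=\sqrt{\mathrm{ADF}(f)\mathrm{ADF}(g)}+\mathrm{CDF}(f,g)$. *)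

theory Defs
  imports "HOL-Computational_Algebra.Polynomial" Complex_Main
begin

definition len :: "complex poly \<Rightarrow> nat" where
  "len a = degree a + 1"

definition dagger :: "complex poly \<Rightarrow> complex poly" where
  "dagger a = map_poly cnj (reflect_poly a)"

definition negz :: "complex poly \<Rightarrow> complex poly" where
  "negz a = pcompose a [:0, -1:]"

definition Pl :: "nat \<Rightarrow> complex poly set" where
  "Pl l = {p. len p = l \<and> coeff p 0 \<noteq> 0}"

definition gs :: "complex poly \<times> complex poly \<Rightarrow> complex poly \<times> complex poly" where
  "gs x = (snd x, fst x)"
definition gn :: "complex poly \<times> complex poly \<Rightarrow> complex poly \<times> complex poly" where
  "gn x = (- fst x, snd x)"
definition gh :: "complex poly \<times> complex poly \<Rightarrow> complex poly \<times> complex poly" where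
  "gh x = (negz (fst x), negz (snd x))"
definition gr :: "complex poly \<times> complex poly \<Rightarrow> complex poly \<times> complex poly" where
  "gr x = (dagger (fst x), dagger (snd x))"

text \<open>The group generated by s, n, h, r (all generators are involutions on
  P_l x P_l, so the generated group equals the generated monoid).\<close>
inductive_set Gll :: "(complex poly \<times> complex poly \<Rightarrow> complex poly \<times> complex poly) set" where
  Gll_id: "id \<in> Gll"
| Gll_s: "t \<in> Gll \<Longrightarrow> gs \<circ> t \<in> Gll"
| Gll_n: "t \<in> Gll \<Longrightarrow> gn \<circ> t \<in> Gll"
| Gll_h: "t \<in> Gll \<Longrightarrow> gh \<circ> t \<in> Gll"
| Gll_r: "t \<in> Gll \<Longrightarrow> gr \<circ> t \<in> Gll"

definition step :: "int \<Rightarrow> complex poly \<Rightarrow> complex poly" where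
  "step \<sigma> q = q + smult (of_int \<sigma>) (monom 1 (len q) * negz (dagger q))"

definition cf :: "complex poly \<Rightarrow> int \<Rightarrow> complex" where
  "cf f k = (if k < 0 then 0 else coeff f (nat k))"

definition Ccorr :: "complex poly \<Rightarrow> complex poly \<Rightarrow> int \<Rightarrow> complex" where
  "Ccorr f g s = (\<Sum>j<len g. cf f (int j + s) * cnj (coeff g j))"

text \<open>Sum over all shifts s (terms vanish outside the given range).\<close>
definition CDF :: "complex poly \<Rightarrow> complex poly \<Rightarrow> real" where
  "CDF f g = (\<Sum>s\<in>{- int (len f + len g) .. int (len f + len g)}. (cmod (Ccorr f g s))\<^sup>2)
              / (cmod (Ccorr f f 0) * cmod (Ccorr g g 0))"

definition ADF :: "complex poly \<Rightarrow> real" where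
  "ADF f = CDF f f - 1"

definition PSC :: "complex poly \<Rightarrow> complex poly \<Rightarrow> real" where
  "PSC f g = sqrt (ADF f * ADF g) + CDF f g"

end

theory Submission
  imports Defs
begin


definition EK :: "nat \<Rightarrow> (complex \<Rightarrow> complex) \<Rightarrow> complex" where
  "EK K \<phi> = (\<Sum>z\<in>{z. z ^ K = 1}. \<phi> z) / of_nat K"

lemma unit_root_norm: assumes "z ^ K = (1::complex)" "K > 0" shows "cmod z = 1"
  using power_eq_1_iff[OF assms(1)] assms(2) by auto

lemma cnj_unit: assumes "cmod z = 1" shows "cnj z = inverse z"
proof -
  have "z * cnj z = 1" using complex_norm_square[of z] assms by simp
  thus ?thesis by (metis inverse_unique mult.commute)
qed

lemma finite_roots1: "K > 0 \<Longrightarrow> finite {z::complex. z ^ K = 1}"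
  by (rule finite_nth_roots)

lemma EK_cong: assumes "K > 0" "\<And>z. cmod z = 1 \<Longrightarrow> \<phi> z = \<psi> z"
  shows "EK K \<phi> = EK K \<psi>"
  unfolding EK_def using assms unit_root_norm by (intro arg_cong2[where f="(/)"] sum.cong) auto

lemma EK_add: "EK K (\<lambda>z. f z + g z) = EK K f + EK K g"
  unfolding EK_def by (simp add: sum.distrib add_divide_distrib)
lemma EK_diff: "EK K (\<lambda>z. f z - g z) = EK K f - EK K g"
  unfolding EK_def by (simp add: sum_subtractf diff_divide_distrib)
lemma EK_cmult: "EK K (\<lambda>z. c * f z) = c * EK K f"
  unfolding EK_def by (simp add: sum_distrib_left)
lemma EK_neg: "EK K (\<lambda>z. - f z) = - EK K f"
  unfolding EK_def by (simp add: sum_negf)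
lemma EK_cnj: "EK K (\<lambda>z. cnj (f z)) = cnj (EK K f)"
  unfolding EK_def by simp
lemma EK_zero: "EK K (\<lambda>z. 0) = 0"
  unfolding EK_def by simp

lemma EK_sym: assumes "even K"
  shows "EK K (\<lambda>z. f (- z)) = EK K f"
proof -
  have "(\<Sum>z\<in>{z. z ^ K = 1}. f (- z)) = (\<Sum>z\<in>{z. z ^ K = (1::complex)}. f z)"
    by (rule sum.reindex_bij_witness[where i=uminus and j=uminus]) (use assms in auto)
  thus ?thesis unfolding EK_def by simp
qed

lemma EK_odd: assumes "even K" "\<And>z. f (- z) = - f z" shows "EK K f = 0"
proof -
  have "EK K f = EK K (\<lambda>z. f (- z))" using EK_sym[OF assms(1)] by simp
  also have "\<dots> = - EK K f" by (simp add: assms(2) EK_neg)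
  finally show ?thesis by simp
qed

lemma EK_Re0: assumes "K > 0" "\<And>z. cmod z = 1 \<Longrightarrow> Re (f z) = 0" shows "Re (EK K f) = 0"
proof -
  have "Re (\<Sum>z\<in>{z. z ^ K = 1}. f z) = 0"
    unfolding Re_sum using assms unit_root_norm by (intro sum.neutral) auto
  thus ?thesis unfolding EK_def by (simp add: Re_divide_of_nat)
qed

lemma sum_root_pow: assumes "0 < d" "d < K"
  shows "(\<Sum>z\<in>{z. z ^ K = (1::complex)}. z ^ d) = 0"
proof -
  have K: "K > 0" using assms by simp
  define \<omega> where "\<omega> = cis (2 * pi * real d / real K)"
  have "(\<Sum>z\<in>{z. z ^ K = (1::complex)}. z ^ d) = (\<Sum>k<K. cis (2 * pi * real k / real K) ^ d)"
    using K by (intro sum.reindex_bij_betw [symmetric] bij_betw_roots_unity) auto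
  also have "\<dots> = (\<Sum>k<K. \<omega> ^ k)"
    by (intro sum.cong refl) (auto simp: \<omega>_def DeMoivre mult_ac)
  also have "\<omega> \<noteq> 1"
  proof
    assume "\<omega> = 1"
    hence "cis (2 * pi * real d / real K) = cis (2 * pi * real 0 / real K)" by (simp add: \<omega>_def)
    moreover have "inj_on (\<lambda>k. cis (2 * pi * real k / real K)) {..<K}"
      using bij_betw_roots_unity[OF K] by (simp add: bij_betw_def)
    ultimately have "d = 0" using assms K inj_onD[of "\<lambda>k. cis (2 * pi * real k / real K)" "{..<K}" d 0] by auto
    thus False using assms by simp
  qed
  moreover have "\<omega> ^ K = 1"
    using K by (simp add: \<omega>_def DeMoivre)
  ultimately show ?thesis by (simp add: sum_gp_strict)
qed

lemma EK_mono: assumes "a < K" "b < K"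
  shows "EK K (\<lambda>z. z ^ a * cnj (z ^ b)) = (if a = b then 1 else 0)"
proof -
  have K: "K > 0" using assms by simp
  have c: "cnj z = inverse z" if "z ^ K = 1" for z
    using cnj_unit unit_root_norm[OF that K] by blast
  have nz: "z \<noteq> 0" if "z ^ K = 1" for z::complex using that K by (auto simp: zero_power)
  show ?thesis
  proof (cases "a = b")
    case True
    have "(\<Sum>z\<in>{z. z ^ K = 1}. z ^ a * cnj (z ^ b)) = (\<Sum>z\<in>{z. z ^ K = (1::complex)}. 1)"
    proof (intro sum.cong refl)
      fix z assume z: "z \<in> {z. z ^ K = (1::complex)}"
      hence "cnj z = inverse z" "z \<noteq> 0" using c nz by auto
      thus "z ^ a * cnj (z ^ b) = 1" using True by (simp add: power_mult_distrib[symmetric])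
    qed
    also have "\<dots> = of_nat K" using card_roots_unity_eq[OF K] by simp
    finally show ?thesis using True K unfolding EK_def by simp
  next
    case False
    show ?thesis
    proof (cases "b < a")
      case True
      have "(\<Sum>z\<in>{z. z ^ K = 1}. z ^ a * cnj (z ^ b)) = (\<Sum>z\<in>{z. z ^ K = (1::complex)}. z ^ (a - b))"
      proof (intro sum.cong refl)
        fix z assume z: "z \<in> {z. z ^ K = (1::complex)}"
        hence i: "cnj z = inverse z" "z \<noteq> 0" using c nz by auto
        have "z ^ a = z ^ (a - b) * z ^ b" using True by (simp add: power_add[symmetric])
        thus "z ^ a * cnj (z ^ b) = z ^ (a - b)" using i by (simp add: power_mult_distrib[symmetric])
      qed
      also have "\<dots> = 0" using True assms by (intro sum_root_pow) auto
      finally show ?thesis using False unfolding EK_def by simp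
    next
      case F2: False
      have "(\<Sum>z\<in>{z. z ^ K = 1}. z ^ a * cnj (z ^ b)) = cnj (\<Sum>z\<in>{z. z ^ K = (1::complex)}. z ^ (b - a))"
        unfolding cnj_sum
      proof (intro sum.cong refl)
        fix z assume z: "z \<in> {z. z ^ K = (1::complex)}"
        hence i: "cnj z = inverse z" "z \<noteq> 0" using c nz by auto
        have "z ^ b = z ^ (b - a) * z ^ a" using F2 False by (simp add: power_add[symmetric])
        thus "z ^ a * cnj (z ^ b) = cnj (z ^ (b - a))" using i by (simp add: power_mult_distrib[symmetric])
      qed
      also have "\<dots> = 0" using F2 False assms by (subst sum_root_pow) auto
      finally show ?thesis using False unfolding EK_def by simp
    qed
  qed
qed


lemma EK_mono': "a < K \<Longrightarrow> b < K \<Longrightarrow> EK K (\<lambda>z. z ^ a * cnj z ^ b) = (if a = b then 1 else 0)"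
  using EK_mono by simp

lemma EK_sum: "finite A \<Longrightarrow> EK K (\<lambda>z. \<Sum>i\<in>A. f i z) = (\<Sum>i\<in>A. EK K (f i))"
  unfolding EK_def by (simp add: sum.swap[of _ _ A] sum_divide_distrib)

lemma EK_parseval: assumes "B \<le> K"
  shows "EK K (\<lambda>z. (\<Sum>i<B. c i * z ^ i) * cnj (\<Sum>j<B. d j * z ^ j)) = (\<Sum>i<B. c i * cnj (d i))"
proof -
  have "EK K (\<lambda>z. (\<Sum>i<B. c i * z ^ i) * cnj (\<Sum>j<B. d j * z ^ j))
      = EK K (\<lambda>z. \<Sum>i<B. \<Sum>j<B. (c i * cnj (d j)) * (z ^ i * cnj (z ^ j)))"
    by (simp add: cnj_sum sum_product mult_ac)
  also have "\<dots> = (\<Sum>i<B. \<Sum>j<B. (c i * cnj (d j)) * (if i = j then 1 else 0))"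
    using assms by (simp add: EK_sum EK_cmult EK_mono')
  also have "\<dots> = (\<Sum>i<B. c i * cnj (d i))"
    by (simp add: if_distrib cong: if_cong)
  finally show ?thesis .
qed

lemma poly_sum: fixes p :: "complex poly" assumes "degree p < B" shows "poly p z = (\<Sum>i<B. coeff p i * z ^ i)"
proof -
  have "poly p z = (\<Sum>i\<le>degree p. coeff p i * z ^ i)" by (rule poly_altdef)
  also have "\<dots> = (\<Sum>i<B. coeff p i * z ^ i)"
    using assms by (intro sum.mono_neutral_left) (auto simp: coeff_eq_0)
  finally show ?thesis .
qed

lemma EK_poly: assumes "degree p < K" "degree q < K"
  shows "EK K (\<lambda>z. poly p z * cnj (poly q z)) = (\<Sum>i<K. coeff p i * cnj (coeff q i))"
  using EK_parseval[of K K "coeff p" "coeff q"] poly_sum[OF assms(1)] poly_sum[OF assms(2)] by simp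

lemma sum_coeff_indep: assumes "degree p < B"
  shows "(\<Sum>i<B. coeff p i * cnj (coeff q i)) = (\<Sum>i<Suc (degree p). coeff p i * cnj (coeff q i))"
  using assms by (intro sum.mono_neutral_right) (auto simp: coeff_eq_0)

lemma EK_indep: assumes "degree p < K" "degree q < K" "degree p < K'" "degree q < K'"
  shows "EK K (\<lambda>z. poly p z * cnj (poly q z)) = EK K' (\<lambda>z. poly p z * cnj (poly q z))"
  using assms by (simp add: EK_poly sum_coeff_indep)

lemma EK_orth: assumes "degree q < a" "a < K"
  shows "EK K (\<lambda>z. z ^ a * cnj (poly q z)) = 0"
proof -
  have "EK K (\<lambda>z. z ^ a * cnj (poly q z)) = EK K (\<lambda>z. poly (monom 1 a) z * cnj (poly q z))"
    by (simp add: poly_monom)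
  also have "\<dots> = (\<Sum>i<K. coeff (monom 1 a) i * cnj (coeff q i))"
    using assms by (intro EK_poly) (auto simp: degree_monom_eq)
  also have "\<dots> = 0" using assms by (intro sum.neutral) (auto simp: coeff_monom coeff_eq_0)
  finally show ?thesis .
qed

lemma poly_negz [simp]: "poly (negz p) z = poly p (- z)"
  by (simp add: negz_def poly_pcompose)

lemma degree_negz [simp]: "degree (negz p) = degree p"
  by (simp add: negz_def degree_pcompose)

lemma coeff0_negz [simp]: "coeff (negz p) 0 = coeff p 0"
  by (metis poly_0_coeff_0 poly_negz minus_zero)

lemma poly_map_cnj: "poly (map_poly cnj p) z = cnj (poly p (cnj z))"
  by (induct p) (auto simp: map_poly_pCons)

lemma poly_dagger: assumes "cmod z = 1"
  shows "poly (dagger p) z = z ^ degree p * cnj (poly p z)"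
proof -
  have z: "z \<noteq> 0" "cnj z \<noteq> 0" using assms by auto
  have "inverse (cnj z) = z" using cnj_unit[OF assms] by (metis complex_cnj_cnj complex_cnj_inverse inverse_inverse_eq)
  thus ?thesis unfolding dagger_def poly_map_cnj using z
    by (simp add: poly_reflect_poly_nz)
qed

lemma degree_dagger: "coeff p 0 \<noteq> 0 \<Longrightarrow> degree (dagger p) = degree p"
  unfolding dagger_def by (subst degree_map_poly) auto

lemma coeff0_dagger: "coeff (dagger p) 0 = cnj (lead_coeff p)"
  unfolding dagger_def by (simp add: coeff_map_poly)


lemma idN: fixes x x2 y y2 w e :: complex
  assumes "e * e = 1" "cnj e = e" "w * cnj w = 1"
  shows "((x + e*w*cnj x2) * (y + e*w*cnj y2)) * cnj ((x + e*w*cnj x2) * (y + e*w*cnj y2))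
   = (x*y) * cnj (x*y) + (x*y2) * cnj (x*y2) + (x2*y) * cnj (x2*y) + (x2*y2) * cnj (x2*y2)
     + e * ((x*cnj x + x2*cnj x2) * (w * cnj (y*y2) + cnj w * (y*y2)))
     + e * ((w * cnj (x*x2) + cnj w * (x*x2)) * (y*cnj y + y2*cnj y2))
     + w^2 * cnj (x*x2*(y*y2)) + cnj (x*x2) * (y*y2) + (x*x2) * cnj (y*y2) + cnj w ^ 2 * (x*x2*(y*y2))"
  using assms by (simp add: algebra_simps) algebra

lemma idM: fixes x x2 y y2 w e :: complex
  assumes "e * e = 1" "cnj e = e" "w * cnj w = 1"
  shows "((x + e*w*cnj x2) * (y2 - e*w*cnj y)) * cnj ((x + e*w*cnj x2) * (y2 - e*w*cnj y))
   = (x*y) * cnj (x*y) + (x*y2) * cnj (x*y2) + (x2*y) * cnj (x2*y) + (x2*y2) * cnj (x2*y2)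
     - e * ((x*cnj x + x2*cnj x2) * (w * cnj (y*y2) + cnj w * (y*y2)))
     + e * ((w * cnj (x*x2) + cnj w * (x*x2)) * (y*cnj y + y2*cnj y2))
     - (w^2 * cnj (x*x2*(y*y2)) + cnj (x*x2) * (y*y2) + (x*x2) * cnj (y*y2) + cnj w ^ 2 * (x*x2*(y*y2)))"
  using assms by (simp add: algebra_simps) algebra

lemma idR: fixes x x2 y y2 w e :: complex
  assumes "e * e = 1" "cnj e = e" "w * cnj w = 1"
  shows "((y + e*w*cnj y2) * (y2 - e*w*cnj y)) * cnj ((x + e*w*cnj x2) * (x2 - e*w*cnj x))
   = (y*y2) * cnj (x*x2) + (x*x2) * cnj (y*y2) - cnj w ^ 2 * (x*x2*(y*y2)) - w^2 * cnj (x*x2*(y*y2))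
     + ((x*y) * cnj (x*y) - (x*y2) * cnj (x*y2) - (x2*y) * cnj (x2*y) + (x2*y2) * cnj (x2*y2))
     + (e * cnj w * (y*y2) * (x2*cnj x2 - x*cnj x) - cnj (e * cnj w * (y*y2) * (x2*cnj x2 - x*cnj x)))
     + (e * w * cnj (x*x2) * (y2*cnj y2 - y*cnj y) - cnj (e * w * cnj (x*x2) * (y2*cnj y2 - y*cnj y)))"
  using assms by (simp add: algebra_simps) algebra

lemma idn: fixes x x2 w e :: complex
  assumes "e * e = 1" "cnj e = e" "w * cnj w = 1"
  shows "(x + e*w*cnj x2) * cnj (x + e*w*cnj x2)
   = x * cnj x + x2 * cnj x2 + e * (w * cnj (x*x2) + cnj w * (x*x2))"
  using assms by (simp add: algebra_simps)

lemma step_poly: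
  assumes "cmod z = 1"
  shows "poly (step \<sigma> F) z = poly F z + of_int \<sigma> * (-1) ^ degree F * z ^ (2 * degree F + 1) * cnj (poly F (- z))"
proof -
  have m: "cmod (- z) = 1" using assms by simp
  have 1: "poly (step \<sigma> F) z = poly F z + of_int \<sigma> * (z ^ (degree F + 1) * poly (dagger F) (- z))"
    unfolding step_def len_def by (simp add: poly_monom)
  have 2: "poly (dagger F) (- z) = (- z) ^ degree F * cnj (poly F (- z))"
    by (rule poly_dagger[OF m])
  have 3: "(- z) ^ degree F = (-1) ^ degree F * z ^ degree F"
    by (rule power_minus)
  have 4: "z ^ (degree F + 1) * z ^ degree F = z ^ (2 * degree F + 1)"
    by (simp only: power_add[symmetric]) (simp add: mult_2)
  show ?thesis unfolding 1 2 3 using 4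
    by (metis (no_types, lifting) mult.assoc mult.left_commute)
qed

lemma step_coeff0: "coeff (step \<sigma> F) 0 = coeff F 0"
  unfolding step_def len_def by (simp add: coeff_monom_mult)

lemma step_degree: assumes "coeff F 0 \<noteq> 0" "\<sigma> \<in> {-1, 1}"
  shows "degree (step \<sigma> F) = 2 * degree F + 1"
proof -
  have F: "F \<noteq> 0" using assms by auto
  have dz: "dagger F \<noteq> 0" using assms coeff0_dagger[of F] F by (metis coeff_0 complex_cnj_zero_iff leading_coeff_0_iff)
  have nz: "negz (dagger F) \<noteq> 0" using dz by (metis coeff_0 coeff0_negz degree_negz degree_0 leading_coeff_0_iff
      coeff0_dagger assms(1) F complex_cnj_zero_iff)
  have s: "(of_int \<sigma> :: complex) \<noteq> 0" using assms by auto
  have d2: "degree (smult (of_int \<sigma>) (monom 1 (len F) * negz (dagger F))) = 2 * degree F + 1"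
    using s nz by (simp add: degree_mult_eq degree_monom_eq degree_dagger[OF assms(1)] len_def)
  show ?thesis unfolding step_def using d2 by (subst degree_add_eq_right) auto
qed



definition qN :: "nat \<Rightarrow> complex poly \<Rightarrow> complex poly \<Rightarrow> real" where
  "qN K F G = Re (EK K (\<lambda>z. poly (F*G) z * cnj (poly (F*G) z)))"
definition qM :: "nat \<Rightarrow> complex poly \<Rightarrow> complex poly \<Rightarrow> real" where
  "qM K F G = Re (EK K (\<lambda>z. poly (F * negz G) z * cnj (poly (F * negz G) z)))"
definition qR :: "nat \<Rightarrow> complex poly \<Rightarrow> complex poly \<Rightarrow> real" where
  "qR K F G = Re (EK K (\<lambda>z. poly (G * negz G) z * cnj (poly (F * negz F) z)))"
definition qn :: "nat \<Rightarrow> complex poly \<Rightarrow> real" where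
  "qn K F = Re (EK K (\<lambda>z. poly F z * cnj (poly F z)))"

lemma recur:
  assumes dF: "degree F = d" and dG: "degree G = d" and s: "\<sigma> \<in> {-1, 1}"
    and Ke: "even K" and Kb: "8 * (d + 1) \<le> K"
  shows "qN K (step \<sigma> F) (step \<sigma> G) = 2 * qN K F G + 2 * qM K F G + 2 * qR K F G"
    and "qM K (step \<sigma> F) (step \<sigma> G) = 2 * qN K F G + 2 * qM K F G - 2 * qR K F G"
    and "qR K (step \<sigma> F) (step \<sigma> G) = 2 * qN K F G - 2 * qM K F G + 2 * qR K F G"
    and "qn K (step \<sigma> F) = 2 * qn K F"
proof -
  have K0: "K > 0" using Kb by simp
  define e :: complex where "e = of_int \<sigma> * (-1) ^ d"
  have ee: "e * e = 1" using s by (auto simp: e_def power_mult_distrib[symmetric])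
  have ce: "cnj e = e" by (simp add: e_def)
  have wz: "z ^ (2*d+1) * cnj (z ^ (2*d+1)) = 1" if "cmod z = 1" for z
  proof -
    have n: "cmod (z ^ (2*d+1)) = 1" using that by (simp add: norm_mult norm_power)
    show ?thesis using complex_norm_square[of "z ^ (2*d+1)", unfolded n] by simp
  qed
  have sF: "poly (step \<sigma> F) z = poly F z + e * z ^ (2*d+1) * cnj (poly F (- z))" if "cmod z = 1" for z
    using step_poly[OF that, of \<sigma> F] by (simp add: dF e_def)
  have sF': "poly (step \<sigma> F) (- z) = poly F (- z) - e * z ^ (2*d+1) * cnj (poly F z)" if "cmod z = 1" for z
    using step_poly[of "- z" \<sigma> F] that by (simp add: dF e_def)
  have sG: "poly (step \<sigma> G) z = poly G z + e * z ^ (2*d+1) * cnj (poly G (- z))" if "cmod z = 1" for z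
    using step_poly[OF that, of \<sigma> G] by (simp add: dG e_def)
  have sG': "poly (step \<sigma> G) (- z) = poly G (- z) - e * z ^ (2*d+1) * cnj (poly G z)" if "cmod z = 1" for z
    using step_poly[of "- z" \<sigma> G] that by (simp add: dG e_def)
  define t1 where "t1 = (\<lambda>z. poly (F*G) z * cnj (poly (F*G) z))"
  define t2 where "t2 = (\<lambda>z. poly (F * negz G) z * cnj (poly (F * negz G) z))"
  define tR where "tR = (\<lambda>z. poly (G * negz G) z * cnj (poly (F * negz F) z))"
  define tn where "tn = (\<lambda>z. poly F z * cnj (poly F z))"
  define o1 where "o1 = (\<lambda>z. e * ((poly F z * cnj (poly F z) + poly F (-z) * cnj (poly F (-z))) *
      (z ^ (2*d+1) * cnj (poly G z * poly G (-z)) + cnj (z ^ (2*d+1)) * (poly G z * poly G (-z)))))"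
  define o2 where "o2 = (\<lambda>z. e * ((z ^ (2*d+1) * cnj (poly F z * poly F (-z)) + cnj (z ^ (2*d+1)) * (poly F z * poly F (-z))) *
      (poly G z * cnj (poly G z) + poly G (-z) * cnj (poly G (-z)))))"
  define o3 where "o3 = (\<lambda>z. e * (z ^ (2*d+1) * cnj (poly F z * poly F (-z)) + cnj (z ^ (2*d+1)) * (poly F z * poly F (-z))))"
  define t7 where "t7 = (\<lambda>z. (z ^ (2*d+1))^2 * cnj (poly F z * poly F (-z) * (poly G z * poly G (-z))))"
  define u1 where "u1 = (\<lambda>z. e * cnj (z ^ (2*d+1)) * (poly G z * poly G (-z)) * (poly F (-z) * cnj (poly F (-z)) - poly F z * cnj (poly F z)))"
  define u2 where "u2 = (\<lambda>z. e * z ^ (2*d+1) * cnj (poly F z * poly F (-z)) * (poly G (-z) * cnj (poly G (-z)) - poly G z * cnj (poly G z)))"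
  have o1: "EK K o1 = 0" by (rule EK_odd[OF Ke]) (simp add: o1_def algebra_simps)
  have o2: "EK K o2 = 0" by (rule EK_odd[OF Ke]) (simp add: o2_def algebra_simps)
  have o3: "EK K o3 = 0" by (rule EK_odd[OF Ke]) (simp add: o3_def algebra_simps)
  have t7: "EK K t7 = 0"
  proof -
    have "EK K t7 = EK K (\<lambda>z. z ^ (4*d+2) * cnj (poly (F * negz F * (G * negz G)) z))"
    proof -
      have a: "(2*d+1)*2 = 4*d+2" by simp
      have pw: "(z^(2*d+1))^2 = z^(4*d+2)" for z :: complex
        using power_mult[of z "2*d+1" 2] a by metis
      show ?thesis unfolding t7_def by (simp only: pw poly_mult poly_negz)
    qed
    also have "\<dots> = 0"
    proof (rule EK_orth)
      have "degree (F * negz F * (G * negz G)) \<le> degree (F * negz F) + degree (G * negz G)"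
        by (rule degree_mult_le)
      also have "\<dots> \<le> (d + d) + (d + d)" using degree_mult_le[of F "negz F"] degree_mult_le[of G "negz G"] dF dG
        by simp
      finally show "degree (F * negz F * (G * negz G)) < 4*d+2" by simp
      show "4*d+2 < K" using Kb by simp
    qed
    finally show ?thesis .
  qed
  have t7c: "EK K (\<lambda>z. cnj (t7 z)) = 0" by (simp add: EK_cnj t7)
  have sym1: "EK K (\<lambda>z. t1 (- z)) = EK K t1" by (rule EK_sym[OF Ke])
  have sym2: "EK K (\<lambda>z. t2 (- z)) = EK K t2" by (rule EK_sym[OF Ke])
  have symn: "EK K (\<lambda>z. tn (- z)) = EK K tn" by (rule EK_sym[OF Ke])
  have tRc: "EK K (\<lambda>z. cnj (tR z)) = cnj (EK K tR)" by (rule EK_cnj)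
  have qN': "qN K F G = Re (EK K t1)" unfolding qN_def t1_def ..
  have qM': "qM K F G = Re (EK K t2)" unfolding qM_def t2_def ..
  have qR': "qR K F G = Re (EK K tR)" unfolding qR_def tR_def ..
  have qn': "qn K F = Re (EK K tn)" unfolding qn_def tn_def ..
  define uu where "uu = (\<lambda>z. u1 z - cnj (u1 z) + (u2 z - cnj (u2 z)))"
  have Ru: "Re (EK K uu) = 0"
    by (rule EK_Re0[OF K0]) (simp add: uu_def)
  show "qN K (step \<sigma> F) (step \<sigma> G) = 2 * qN K F G + 2 * qM K F G + 2 * qR K F G"
  proof -
    have "EK K (\<lambda>z. poly (step \<sigma> F * step \<sigma> G) z * cnj (poly (step \<sigma> F * step \<sigma> G) z))
      = EK K (\<lambda>z. t1 z + t2 z + t2 (- z) + t1 (- z) + o1 z + o2 z + t7 z + tR z + cnj (tR z) + cnj (t7 z))"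
    proof (rule EK_cong[OF K0])
      fix z :: complex assume z: "cmod z = 1"
      show "poly (step \<sigma> F * step \<sigma> G) z * cnj (poly (step \<sigma> F * step \<sigma> G) z)
        = t1 z + t2 z + t2 (- z) + t1 (- z) + o1 z + o2 z + t7 z + tR z + cnj (tR z) + cnj (t7 z)"
        unfolding poly_mult sF[OF z] sG[OF z] idN[OF ee ce wz[OF z]]
        by (simp add: t1_def t2_def o1_def o2_def t7_def tR_def poly_mult)
    qed
    also have "\<dots> = 2 * EK K t1 + 2 * EK K t2 + EK K tR + cnj (EK K tR)"
      by (simp add: EK_add sym1 sym2 o1 o2 t7 t7c tRc)
    finally have X: "EK K (\<lambda>z. poly (step \<sigma> F * step \<sigma> G) z * cnj (poly (step \<sigma> F * step \<sigma> G) z)) = 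
      2 * EK K t1 + 2 * EK K t2 + EK K tR + cnj (EK K tR)" .
    show ?thesis unfolding qN' qM' qR' unfolding qN_def X by simp
  qed
  show "qM K (step \<sigma> F) (step \<sigma> G) = 2 * qN K F G + 2 * qM K F G - 2 * qR K F G"
  proof -
    have "EK K (\<lambda>z. poly (step \<sigma> F * negz (step \<sigma> G)) z * cnj (poly (step \<sigma> F * negz (step \<sigma> G)) z))
      = EK K (\<lambda>z. t1 z + t2 z + t2 (- z) + t1 (- z) - o1 z + o2 z - (t7 z + tR z + cnj (tR z) + cnj (t7 z)))"
    proof (rule EK_cong[OF K0])
      fix z :: complex assume z: "cmod z = 1"
      show "poly (step \<sigma> F * negz (step \<sigma> G)) z * cnj (poly (step \<sigma> F * negz (step \<sigma> G)) z)
        = t1 z + t2 z + t2 (- z) + t1 (- z) - o1 z + o2 z - (t7 z + tR z + cnj (tR z) + cnj (t7 z))"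
        unfolding poly_mult poly_negz sF[OF z] sG'[OF z] idM[OF ee ce wz[OF z]]
        by (simp add: t1_def t2_def o1_def o2_def t7_def tR_def poly_mult)
    qed
    also have "\<dots> = 2 * EK K t1 + 2 * EK K t2 - (EK K tR + cnj (EK K tR))"
      by (simp add: EK_add EK_diff sym1 sym2 o1 o2 t7 t7c tRc)
    finally have X: "EK K (\<lambda>z. poly (step \<sigma> F * negz (step \<sigma> G)) z * cnj (poly (step \<sigma> F * negz (step \<sigma> G)) z))
      = 2 * EK K t1 + 2 * EK K t2 - (EK K tR + cnj (EK K tR))" .
    show ?thesis unfolding qN' qM' qR' unfolding qM_def X by simp
  qed
  show "qR K (step \<sigma> F) (step \<sigma> G) = 2 * qN K F G - 2 * qM K F G + 2 * qR K F G"
  proof -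
    have "EK K (\<lambda>z. poly (step \<sigma> G * negz (step \<sigma> G)) z * cnj (poly (step \<sigma> F * negz (step \<sigma> F)) z))
      = EK K (\<lambda>z. tR z + cnj (tR z) - cnj (t7 z) - t7 z + (t1 z - t2 z - t2 (- z) + t1 (- z))
           + uu z)"
    proof (rule EK_cong[OF K0])
      fix z :: complex assume z: "cmod z = 1"
      show "poly (step \<sigma> G * negz (step \<sigma> G)) z * cnj (poly (step \<sigma> F * negz (step \<sigma> F)) z)
        = tR z + cnj (tR z) - cnj (t7 z) - t7 z + (t1 z - t2 z - t2 (- z) + t1 (- z))
           + uu z"
        unfolding poly_mult poly_negz sF[OF z] sG[OF z] sF'[OF z] sG'[OF z] idR[OF ee ce wz[OF z]]
        by (simp add: t1_def t2_def u1_def u2_def uu_def t7_def tR_def poly_mult)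
    qed
    hence "Re (EK K (\<lambda>z. poly (step \<sigma> G * negz (step \<sigma> G)) z * cnj (poly (step \<sigma> F * negz (step \<sigma> F)) z)))
       = Re (EK K tR + cnj (EK K tR) - 0 - 0 + (EK K t1 - EK K t2 - EK K t2 + EK K t1))
         + Re (EK K uu)"
      by (simp only: EK_add EK_diff sym1 sym2 t7 t7c tRc plus_complex.sel)
    hence X: "Re (EK K (\<lambda>z. poly (step \<sigma> G * negz (step \<sigma> G)) z * cnj (poly (step \<sigma> F * negz (step \<sigma> F)) z)))
       = Re (EK K tR + cnj (EK K tR) - 0 - 0 + (EK K t1 - EK K t2 - EK K t2 + EK K t1))" using Ru by simp
    show ?thesis unfolding qN' qM' qR' unfolding qR_def X by simp
  qed
  show "qn K (step \<sigma> F) = 2 * qn K F"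
  proof -
    have "EK K (\<lambda>z. poly (step \<sigma> F) z * cnj (poly (step \<sigma> F) z))
      = EK K (\<lambda>z. tn z + tn (- z) + o3 z)"
    proof (rule EK_cong[OF K0])
      fix z :: complex assume z: "cmod z = 1"
      show "poly (step \<sigma> F) z * cnj (poly (step \<sigma> F) z) = tn z + tn (- z) + o3 z"
        unfolding sF[OF z] idn[OF ee ce wz[OF z]]
        by (simp add: tn_def o3_def)
    qed
    also have "\<dots> = 2 * EK K tn" by (simp add: EK_add symn o3)
    finally have X: "EK K (\<lambda>z. poly (step \<sigma> F) z * cnj (poly (step \<sigma> F) z)) = 2 * EK K tn" .
    show ?thesis unfolding qn' unfolding qn_def X by simp
  qed
qed



lemma shift_sum: fixes F :: "complex poly"
  assumes "dd + degree F < B"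
  shows "(\<Sum>k<B. cf F (int k - int dd) * z ^ k) = z ^ dd * poly F z"
proof -
  have spl: "(\<Sum>k<B. g k) = (\<Sum>k\<in>{0..<dd}. g k) + (\<Sum>k\<in>{dd..<B}. g k)" for g :: "nat \<Rightarrow> complex"
    using assms by (simp add: sum.atLeastLessThan_concat atLeast0LessThan[symmetric])
  have z1: "(\<Sum>k\<in>{0..<dd}. cf F (int k - int dd) * z ^ k) = 0"
    by (intro sum.neutral) (auto simp: cf_def)
  have "(\<Sum>k\<in>{dd..<B}. cf F (int k - int dd) * z ^ k)
      = (\<Sum>i\<in>{0..<B-dd}. cf F (int (i + dd) - int dd) * z ^ (i + dd))"
    using sum.shift_bounds_nat_ivl[of "\<lambda>k. cf F (int k - int dd) * z ^ k" 0 dd "B-dd"] assms by simp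
  also have "\<dots> = z ^ dd * (\<Sum>i<B-dd. coeff F i * z ^ i)"
    by (simp add: cf_def power_add sum_distrib_left atLeast0LessThan mult_ac)
  also have "(\<Sum>i<B-dd. coeff F i * z ^ i) = poly F z"
    using assms by (intro poly_sum[symmetric]) simp
  finally show ?thesis using z1 spl by (simp add: mult_ac)
qed

lemma corr_poly:
  assumes z: "cmod z = 1" and dF: "degree F < n" and lG: "len G = n"
  shows "z ^ (2*n) * poly F z * cnj (poly G z) = (\<Sum>k<4*n+1. Ccorr F G (int k - int (2*n)) * z ^ k)"
proof -
  have dG: "degree G < n" using lG by (simp add: len_def)
  have cz: "cnj z * z = 1" using complex_norm_square[of z] z by (simp add: mult.commute)
  have "(\<Sum>k<4*n+1. Ccorr F G (int k - int (2*n)) * z ^ k)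
      = (\<Sum>k<4*n+1. \<Sum>j<n. cnj (coeff G j) * (cf F (int k - int (2*n - j)) * z ^ k))"
    unfolding Ccorr_def lG sum_distrib_right
    by (intro sum.cong refl) (auto simp: of_nat_diff algebra_simps)
  also have "\<dots> = (\<Sum>j<n. cnj (coeff G j) * (\<Sum>k<4*n+1. cf F (int k - int (2*n - j)) * z ^ k))"
    unfolding sum_distrib_left by (rule sum.swap)
  also have "\<dots> = (\<Sum>j<n. cnj (coeff G j) * (z ^ (2*n - j) * poly F z))"
    using dF by (intro sum.cong refl) (subst shift_sum, auto)
  also have "\<dots> = (\<Sum>j<n. cnj (coeff G j) * (z ^ (2*n) * cnj z ^ j * poly F z))"
  proof (intro sum.cong refl)
    fix j assume "j \<in> {..<n}"
    hence "z ^ (2*n) = z ^ (2*n - j) * z ^ j" by (simp add: power_add[symmetric])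
    hence "z ^ (2*n) * cnj z ^ j = z ^ (2*n - j) * (cnj z * z) ^ j" by (simp add: power_mult_distrib mult_ac)
    thus "cnj (coeff G j) * (z ^ (2*n - j) * poly F z) = cnj (coeff G j) * (z ^ (2*n) * cnj z ^ j * poly F z)"
      using cz by simp
  qed
  also have "\<dots> = z ^ (2*n) * poly F z * cnj (\<Sum>j<n. coeff G j * z ^ j)"
    by (simp add: sum_distrib_left sum_distrib_right cnj_sum mult_ac)
  also have "(\<Sum>j<n. coeff G j * z ^ j) = poly G z" using dG by (intro poly_sum[symmetric])
  finally show ?thesis ..
qed

lemma link_N:
  assumes lF: "len F = n" and lG: "len G = n" and K: "4*n+1 \<le> K"
  shows "(\<Sum>s\<in>{- int (len F + len G)..int (len F + len G)}. (cmod (Ccorr F G s))\<^sup>2) = qN K F G"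
proof -
  define c where "c = (\<lambda>k::nat. Ccorr F G (int k - int (2*n)))"
  have dF: "degree F < n" using lF by (simp add: len_def)
  have "EK K (\<lambda>z. poly (F*G) z * cnj (poly (F*G) z))
      = EK K (\<lambda>z. (\<Sum>k<4*n+1. c k * z ^ k) * cnj (\<Sum>k<4*n+1. c k * z ^ k))"
  proof (rule EK_cong)
    show "K > 0" using K by simp
    fix z :: complex assume z: "cmod z = 1"
    have w: "z ^ (2*n) * cnj (z ^ (2*n)) = 1"
    proof -
      have n: "cmod (z ^ (2*n)) = 1" using z by (simp add: norm_power)
      show ?thesis using complex_norm_square[of "z ^ (2*n)", unfolded n] by simp
    qed
    have "poly (F*G) z * cnj (poly (F*G) z) = (z ^ (2*n) * poly F z * cnj (poly G z)) * cnj (z ^ (2*n) * poly F z * cnj (poly G z))"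
    proof -
      have "(z ^ (2*n) * poly F z * cnj (poly G z)) * cnj (z ^ (2*n) * poly F z * cnj (poly G z))
          = (z ^ (2*n) * cnj (z ^ (2*n))) * (poly F z * poly G z * cnj (poly F z * poly G z))"
        by (simp add: mult_ac)
      thus ?thesis using w by (simp add: poly_mult)
    qed
    thus "poly (F*G) z * cnj (poly (F*G) z) = (\<Sum>k<4*n+1. c k * z ^ k) * cnj (\<Sum>k<4*n+1. c k * z ^ k)"
      unfolding c_def corr_poly[OF z dF lG] .
  qed
  also have "\<dots> = (\<Sum>k<4*n+1. c k * cnj (c k))" using K by (rule EK_parseval)
  also have "\<dots> = of_real (\<Sum>k<4*n+1. (cmod (c k))\<^sup>2)"
    by (simp add: complex_norm_square[symmetric] of_real_sum)
  finally have 1: "qN K F G = (\<Sum>k<4*n+1. (cmod (c k))\<^sup>2)" unfolding qN_def by simp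
  have "(\<Sum>s\<in>{- int (len F + len G)..int (len F + len G)}. (cmod (Ccorr F G s))\<^sup>2)
      = (\<Sum>k<4*n+1. (cmod (c k))\<^sup>2)"
    unfolding c_def lF lG
    by (rule sum.reindex_bij_witness[where i="\<lambda>k. int k - int (2*n)" and j="\<lambda>s. nat (s + int (2*n))"]) auto
  thus ?thesis using 1 by simp
qed

lemma link_n:
  assumes lF: "len F = n" and K: "n \<le> K"
  shows "cmod (Ccorr F F 0) = qn K F" and "qn K F = (\<Sum>j<n. (cmod (coeff F j))\<^sup>2)"
proof -
  have dF: "degree F < n" "degree F < K" using lF K by (auto simp: len_def)
  have c: "Ccorr F F 0 = of_real (\<Sum>j<n. (cmod (coeff F j))\<^sup>2)"
    unfolding Ccorr_def lF by (simp add: cf_def complex_norm_square[symmetric] of_real_sum)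
  have "EK K (\<lambda>z. poly F z * cnj (poly F z)) = (\<Sum>j<K. coeff F j * cnj (coeff F j))"
    using dF by (intro EK_poly) auto
  also have "\<dots> = (\<Sum>j<n. coeff F j * cnj (coeff F j))"
    using sum_coeff_indep[OF dF(2), of F] sum_coeff_indep[OF dF(1), of F] by simp
  also have "\<dots> = of_real (\<Sum>j<n. (cmod (coeff F j))\<^sup>2)" by (simp add: complex_norm_square[symmetric] of_real_sum)
  finally have q: "qn K F = (\<Sum>j<n. (cmod (coeff F j))\<^sup>2)" unfolding qn_def by simp
  show "qn K F = (\<Sum>j<n. (cmod (coeff F j))\<^sup>2)" by (rule q)
  show "cmod (Ccorr F F 0) = qn K F" unfolding c q norm_of_real
    by (rule abs_of_nonneg, rule sum_nonneg) simp
qed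

lemma link_CDF:
  assumes lF: "len F = n" and lG: "len G = n" and K: "4*n+1 \<le> K"
  shows "CDF F G = qN K F G / (qn K F * qn K G)"
proof -
  have a: "cmod (Ccorr F F 0) = qn K F" using link_n(1)[OF lF, of K] K by simp
  have b: "cmod (Ccorr G G 0) = qn K G" using link_n(1)[OF lG, of K] K by simp
  show ?thesis unfolding CDF_def link_N[OF lF lG K] a b ..
qed



lemma Pl_D: "F \<in> Pl l \<Longrightarrow> len F = l \<and> coeff F 0 \<noteq> 0"
  by (simp add: Pl_def)

lemma q_indep:
  assumes dF: "degree F = d" and dG: "degree G = d" and K: "2*d < K" "2*d < K'"
  shows "qN K F G = qN K' F G" "qM K F G = qM K' F G" "qR K F G = qR K' F G" "qn K F = qn K' F"
proof -
  have a: "degree (F*G) \<le> 2*d" using degree_mult_le[of F G] dF dG by simp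
  have b: "degree (F * negz G) \<le> 2*d" using degree_mult_le[of F "negz G"] dF dG by simp
  have c: "degree (G * negz G) \<le> 2*d" using degree_mult_le[of G "negz G"] dG by simp
  have d: "degree (F * negz F) \<le> 2*d" using degree_mult_le[of F "negz F"] dF by simp
  show "qN K F G = qN K' F G" unfolding qN_def using a K by (subst EK_indep) auto
  show "qM K F G = qM K' F G" unfolding qM_def using b K by (subst EK_indep) auto
  show "qR K F G = qR K' F G" unfolding qR_def using c d K by (subst EK_indep) auto
  show "qn K F = qn K' F" unfolding qn_def using dF K by (subst EK_indep) auto
qed

lemma step_Pl: assumes "F \<in> Pl l" "\<sigma> \<in> {-1, 1}" shows "step \<sigma> F \<in> Pl (2*l)"
  using assms step_degree[of F \<sigma>] step_coeff0[of \<sigma> F] by (auto simp: Pl_def len_def)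

lemma seq_Pl: assumes "F 0 \<in> Pl l" "\<And>m. \<sigma> m \<in> {-1, 1}" "\<And>m. F (Suc m) = step (\<sigma> m) (F m)"
  shows "F m \<in> Pl (2^m * l)"
proof (induction m)
  case 0 thus ?case using assms by simp
next
  case (Suc m) thus ?case using step_Pl[OF Suc assms(2)[of m]] assms(3)[of m] by (simp add: mult.assoc)
qed

definition Kof :: "complex poly \<Rightarrow> nat" where "Kof F = 8 * len F"

definition Lq :: "complex poly \<Rightarrow> complex poly \<Rightarrow> real" where
  "Lq F G = (2 * qN (Kof F) F G + qM (Kof F) F G + qR (Kof F) F G) / (3 * qn (Kof F) F * qn (Kof F) G)"

lemma conv:
  assumes F0: "F 0 \<in> Pl l" and G0: "G 0 \<in> Pl l" and s: "\<And>m. \<sigma> m \<in> {-1, 1}"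
    and rF: "\<And>m. F (Suc m) = step (\<sigma> m) (F m)" and rG: "\<And>m. G (Suc m) = step (\<sigma> m) (G m)"
  shows "(\<lambda>m. CDF (F m) (G m)) \<longlonglongrightarrow> Lq (F 0) (G 0)"
proof -
  have PF: "F m \<in> Pl (2^m * l)" for m by (rule seq_Pl[OF F0 s rF])
  have PG: "G m \<in> Pl (2^m * l)" for m by (rule seq_Pl[OF G0 s rG])
  have l1: "l \<ge> 1" using F0 by (simp add: Pl_def len_def)
  define Ks where "Ks m = 8 * (2^m * l)" for m
  define N where "N m = qN (Ks m) (F m) (G m)" for m
  define M where "M m = qM (Ks m) (F m) (G m)" for m
  define R where "R m = qR (Ks m) (F m) (G m)" for m
  define nF where "nF m = qn (Ks m) (F m)" for m
  define nG where "nG m = qn (Ks m) (G m)" for m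
  have dF: "degree (F m) = 2^m * l - 1" for m using PF[of m] by (auto simp: Pl_def len_def)
  have dG: "degree (G m) = 2^m * l - 1" for m using PG[of m] by (auto simp: Pl_def len_def)
  have pos: "2^m * l \<ge> 1" for m using l1 by simp
  have rec: "N (Suc m) = 2 * N m + 2 * M m + 2 * R m \<and> M (Suc m) = 2 * N m + 2 * M m - 2 * R m
     \<and> R (Suc m) = 2 * N m - 2 * M m + 2 * R m \<and> nF (Suc m) = 2 * nF m \<and> nG (Suc m) = 2 * nG m" for m
  proof -
    define x where "x = 2^m * l"
    have x1: "x \<ge> 1" using pos[of m] by (simp add: x_def)
    have Kx: "Ks (Suc m) = 16 * x" "Ks m = 8 * x" by (simp_all add: Ks_def x_def)
    have dFx: "degree (F m) = x - 1" "degree (G m) = x - 1" using dF[of m] dG[of m] by (simp_all add: x_def)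
    have e: "even (Ks (Suc m))" by (simp add: Ks_def)
    have b: "8 * ((x - 1) + 1) \<le> Ks (Suc m)" using x1 unfolding Kx by simp
    have i1: "2 * (x - 1) < Ks (Suc m)" "2 * (x - 1) < Ks m" using x1 unfolding Kx by auto
    note r = recur[OF dFx(1) dFx(2) s[of m] e b]
    note r2 = recur[OF dFx(2) dFx(2) s[of m] e b]
    note qi = q_indep[OF dFx(1) dFx(2) i1]
    note qi2 = q_indep[OF dFx(2) dFx(2) i1]
    show ?thesis unfolding N_def M_def R_def nF_def nG_def rF rG
      using r r2 qi qi2 by simp
  qed
  define a where "a = (2 * N 0 + M 0 + R 0) / 3"
  define a2 where "a2 = (N 0 + 2 * M 0 - R 0) / 3"
  define a3 where "a3 = (N 0 - M 0 + 2 * R 0) / 3"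
  define b where "b = (N 0 - M 0 - R 0) / 3"
  have cf: "N m = 4^m * a + (-2)^m * b \<and> M m = 4^m * a2 - (-2)^m * b \<and> R m = 4^m * a3 - (-2)^m * b" for m
  proof (induction m)
    case 0 thus ?case by (simp add: a_def a2_def a3_def b_def field_simps)
  next
    case (Suc m)
    thus ?case using rec[of m] by (simp add: a_def a2_def a3_def b_def field_simps)
  qed
  have cn: "nF m = 2^m * nF 0 \<and> nG m = 2^m * nG 0" for m
    by (induction m) (use rec in auto)
  have cdf: "CDF (F m) (G m) = a / (nF 0 * nG 0) + (-1/2)^m * (b / (nF 0 * nG 0))" for m
  proof -
    have lF: "len (F m) = 2^m * l" and lG: "len (G m) = 2^m * l" using PF[of m] PG[of m] by (auto simp: Pl_def)
    have K: "4 * (2^m * l) + 1 \<le> Ks m" using pos[of m] by (simp add: Ks_def)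
    have "CDF (F m) (G m) = N m / (nF m * nG m)"
      unfolding N_def nF_def nG_def by (rule link_CDF[OF lF lG K])
    also have "\<dots> = (4^m * a + (-2)^m * b) / (4^m * (nF 0 * nG 0))"
      using cf[of m] cn[of m] by (simp add: power_mult_distrib[symmetric] mult_ac)
    also have "\<dots> = a / (nF 0 * nG 0) + (-1/2)^m * (b / (nF 0 * nG 0))"
    proof -
      have "(-2::real)^m = 4^m * (-1/2)^m" by (simp add: power_mult_distrib[symmetric])
      thus ?thesis by (simp add: add_divide_distrib)
    qed
    finally show ?thesis .
  qed
  have lim: "(\<lambda>m. a / (nF 0 * nG 0) + (-1/2::real)^m * (b / (nF 0 * nG 0))) \<longlonglongrightarrow> a / (nF 0 * nG 0) + 0 * (b / (nF 0 * nG 0))"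
    by (intro tendsto_intros LIMSEQ_power_zero) simp
  have L: "Lq (F 0) (G 0) = a / (nF 0 * nG 0)"
  proof -
    have "Kof (F 0) = Ks 0" using F0 by (simp add: Kof_def Ks_def Pl_def)
    thus ?thesis unfolding Lq_def a_def N_def M_def R_def nF_def nG_def by (simp add: field_simps)
  qed
  show ?thesis using lim unfolding cdf L by simp
qed


lemma qN_swap: "qN K G F = qN K F G"
  unfolding qN_def by (simp add: mult.commute)

lemma qM_swap: assumes "even K" shows "qM K G F = qM K F G"
proof -
  have "EK K (\<lambda>z. poly (G * negz F) z * cnj (poly (G * negz F) z))
      = EK K (\<lambda>z. (\<lambda>z. poly (F * negz G) z * cnj (poly (F * negz G) z)) (- z))"
    by (simp add: poly_mult mult_ac)
  also have "\<dots> = EK K (\<lambda>z. poly (F * negz G) z * cnj (poly (F * negz G) z))"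
    by (rule EK_sym[OF assms])
  finally show ?thesis unfolding qM_def by simp
qed

lemma qR_swap: "qR K G F = qR K F G"
proof -
  have e: "(\<lambda>z. poly (F * negz F) z * cnj (poly (G * negz G) z)) = (\<lambda>z. cnj (poly (G * negz G) z * cnj (poly (F * negz F) z)))"
    by (rule ext) (simp add: mult.commute)
  show ?thesis unfolding qR_def e EK_cnj by simp
qed

lemma q_negL: "qN K (-F) G = qN K F G" "qM K (-F) G = qM K F G" "qR K (-F) G = qR K F G" "qn K (-F) = qn K F"
  unfolding qN_def qM_def qR_def qn_def by (simp_all add: poly_mult)

lemma q_negR: "qN K F (-G) = qN K F G" "qM K F (-G) = qM K F G" "qR K F (-G) = qR K F G"
  unfolding qN_def qM_def qR_def by (simp_all add: poly_mult)

lemma q_negz: assumes "even K"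
  shows "qN K (negz F) (negz G) = qN K F G" "qM K (negz F) (negz G) = qM K F G"
    "qR K (negz F) (negz G) = qR K F G" "qn K (negz F) = qn K F"
proof -
  have "EK K (\<lambda>z. poly (negz F * negz G) z * cnj (poly (negz F * negz G) z))
      = EK K (\<lambda>z. (\<lambda>z. poly (F * G) z * cnj (poly (F * G) z)) (- z))"
    by (simp add: poly_mult)
  also have "\<dots> = EK K (\<lambda>z. poly (F * G) z * cnj (poly (F * G) z))" by (rule EK_sym[OF assms])
  finally show "qN K (negz F) (negz G) = qN K F G" unfolding qN_def by simp
  have "EK K (\<lambda>z. poly (negz F * negz (negz G)) z * cnj (poly (negz F * negz (negz G)) z))
      = EK K (\<lambda>z. (\<lambda>z. poly (F * negz G) z * cnj (poly (F * negz G) z)) (- z))"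
    by (simp add: poly_mult)
  also have "\<dots> = EK K (\<lambda>z. poly (F * negz G) z * cnj (poly (F * negz G) z))" by (rule EK_sym[OF assms])
  finally show "qM K (negz F) (negz G) = qM K F G" unfolding qM_def by simp
  show "qR K (negz F) (negz G) = qR K F G" unfolding qR_def by (simp add: poly_mult mult_ac)
  have "EK K (\<lambda>z. poly (negz F) z * cnj (poly (negz F) z))
      = EK K (\<lambda>z. (\<lambda>z. poly F z * cnj (poly F z)) (- z))" by simp
  also have "\<dots> = EK K (\<lambda>z. poly F z * cnj (poly F z))" by (rule EK_sym[OF assms])
  finally show "qn K (negz F) = qn K F" unfolding qn_def by simp
qed

lemma unit_pow: "cmod z = 1 \<Longrightarrow> z ^ d * cnj (z ^ d) = 1"
proof -
  assume z: "cmod z = 1"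
  have n: "cmod (z ^ d) = 1" using z by (simp add: norm_power)
  show ?thesis using complex_norm_square[of "z ^ d", unfolded n] by simp
qed

lemma q_dagger: assumes dF: "degree F = d" and dG: "degree G = d" and K: "K > 0"
  shows "qN K (dagger F) (dagger G) = qN K F G" "qM K (dagger F) (dagger G) = qM K F G"
    "qR K (dagger F) (dagger G) = qR K F G" "qn K (dagger F) = qn K F"
proof -
  have pd: "poly (dagger H) z = z ^ d * cnj (poly H z)" if "cmod z = 1" "degree H = d" for H z
    using poly_dagger[OF that(1), of H] that(2) by simp
  have w: "z ^ d * cnj (z ^ d) = 1" "(- z) ^ d * cnj ((- z) ^ d) = 1" if "cmod z = 1" for z
    using unit_pow[of z d] unit_pow[of "- z" d] that by auto
  have "EK K (\<lambda>z. poly (dagger F * dagger G) z * cnj (poly (dagger F * dagger G) z))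
      = EK K (\<lambda>z. poly (F * G) z * cnj (poly (F * G) z))"
  proof (rule EK_cong[OF K])
    fix z :: complex assume z: "cmod z = 1"
    have "poly (dagger F * dagger G) z * cnj (poly (dagger F * dagger G) z)
       = (z ^ d * cnj (z ^ d)) * (z ^ d * cnj (z ^ d)) * (poly (F * G) z * cnj (poly (F * G) z))"
      unfolding poly_mult pd[OF z dF] pd[OF z dG] by (simp add: mult_ac)
    thus "poly (dagger F * dagger G) z * cnj (poly (dagger F * dagger G) z) = poly (F * G) z * cnj (poly (F * G) z)"
      using w[OF z] by simp
  qed
  thus "qN K (dagger F) (dagger G) = qN K F G" unfolding qN_def by simp
  have "EK K (\<lambda>z. poly (dagger F * negz (dagger G)) z * cnj (poly (dagger F * negz (dagger G)) z))
      = EK K (\<lambda>z. poly (F * negz G) z * cnj (poly (F * negz G) z))"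
  proof (rule EK_cong[OF K])
    fix z :: complex assume z: "cmod z = 1"
    have z2: "cmod (- z) = 1" using z by simp
    have "poly (dagger F * negz (dagger G)) z * cnj (poly (dagger F * negz (dagger G)) z)
       = (z ^ d * cnj (z ^ d)) * ((- z) ^ d * cnj ((- z) ^ d)) * (poly (F * negz G) z * cnj (poly (F * negz G) z))"
      unfolding poly_mult poly_negz pd[OF z dF] pd[OF z2 dG] by (simp add: mult_ac)
    thus "poly (dagger F * negz (dagger G)) z * cnj (poly (dagger F * negz (dagger G)) z) = poly (F * negz G) z * cnj (poly (F * negz G) z)"
      using w[OF z] by simp
  qed
  thus "qM K (dagger F) (dagger G) = qM K F G" unfolding qM_def by simp
  have "EK K (\<lambda>z. poly (dagger G * negz (dagger G)) z * cnj (poly (dagger F * negz (dagger F)) z))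
      = EK K (\<lambda>z. cnj (poly (G * negz G) z * cnj (poly (F * negz F) z)))"
  proof (rule EK_cong[OF K])
    fix z :: complex assume z: "cmod z = 1"
    have z2: "cmod (- z) = 1" using z by simp
    have "poly (dagger G * negz (dagger G)) z * cnj (poly (dagger F * negz (dagger F)) z)
       = (z ^ d * cnj (z ^ d)) * ((- z) ^ d * cnj ((- z) ^ d)) * cnj (poly (G * negz G) z * cnj (poly (F * negz F) z))"
      unfolding poly_mult poly_negz pd[OF z dF] pd[OF z2 dF] pd[OF z dG] pd[OF z2 dG] by (simp add: mult_ac)
    thus "poly (dagger G * negz (dagger G)) z * cnj (poly (dagger F * negz (dagger F)) z) = cnj (poly (G * negz G) z * cnj (poly (F * negz F) z))"
      using w[OF z] by simp
  qed
  thus "qR K (dagger F) (dagger G) = qR K F G" unfolding qR_def by (simp only: EK_cnj cnj.sel)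
  have "EK K (\<lambda>z. poly (dagger F) z * cnj (poly (dagger F) z)) = EK K (\<lambda>z. poly F z * cnj (poly F z))"
  proof (rule EK_cong[OF K])
    fix z :: complex assume z: "cmod z = 1"
    have "poly (dagger F) z * cnj (poly (dagger F) z) = (z ^ d * cnj (z ^ d)) * (poly F z * cnj (poly F z))"
      unfolding pd[OF z dF] by (simp add: mult_ac)
    thus "poly (dagger F) z * cnj (poly (dagger F) z) = poly F z * cnj (poly F z)" using w[OF z] by simp
  qed
  thus "qn K (dagger F) = qn K F" unfolding qn_def by simp
qed

lemma len_neg [simp]: "len (- F) = len F" by (simp add: len_def)
lemma len_negz [simp]: "len (negz F) = len F" by (simp add: len_def)
lemma len_dagger: "coeff F 0 \<noteq> 0 \<Longrightarrow> len (dagger F) = len F" by (simp add: len_def degree_dagger)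

lemma Pl_neg: "F \<in> Pl l \<Longrightarrow> - F \<in> Pl l" by (simp add: Pl_def)
lemma Pl_negz: "F \<in> Pl l \<Longrightarrow> negz F \<in> Pl l" by (simp add: Pl_def)
lemma Pl_dagger: "F \<in> Pl l \<Longrightarrow> dagger F \<in> Pl l"
  by (auto simp: Pl_def len_dagger coeff0_dagger)

lemma Lq_swap: "len F = len G \<Longrightarrow> Lq G F = Lq F G"
  unfolding Lq_def Kof_def by (simp add: qN_swap qM_swap qR_swap mult_ac)
lemma Lq_negL: "Lq (-F) G = Lq F G"
  unfolding Lq_def Kof_def by (simp add: q_negL)
lemma Lq_negR: "Lq F (-G) = Lq F G"
  unfolding Lq_def Kof_def by (simp add: q_negR q_negL(4))
lemma Lq_negz: "Lq (negz F) (negz G) = Lq F G"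
  unfolding Lq_def Kof_def by (simp add: q_negz)
lemma Lq_dagger: assumes "F \<in> Pl l" "G \<in> Pl l" shows "Lq (dagger F) (dagger G) = Lq F G"
proof -
  have d: "degree F = l - 1" "degree G = l - 1" "coeff F 0 \<noteq> 0" using assms by (auto simp: Pl_def len_def)
  have K: "Kof F > 0" by (simp add: Kof_def len_def)
  show ?thesis unfolding Lq_def using q_dagger[OF d(1) d(2) K] q_dagger[OF d(1) d(1) K] q_dagger[OF d(2) d(2) K]
    by (simp add: Kof_def len_dagger[OF d(3)])
qed

definition Lp :: "complex poly \<times> complex poly \<Rightarrow> real" where
  "Lp p = Lq (fst p) (snd p)"
definition Ap :: "complex poly \<times> complex poly \<Rightarrow> real" where
  "Ap p = (Lq (fst p) (fst p) - 1) * (Lq (snd p) (snd p) - 1)"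

lemma gen_inv:
  assumes p: "p \<in> Pl l \<times> Pl l" and g: "gg \<in> {gs, gn, gh, gr}"
  shows "gg p \<in> Pl l \<times> Pl l \<and> Lp (gg p) = Lp p \<and> Ap (gg p) = Ap p"
proof -
  obtain F G where pp: "p = (F, G)" by (cases p)
  have F: "F \<in> Pl l" and G: "G \<in> Pl l" using p pp by auto
  have lFG: "len F = len G" using F G by (simp add: Pl_def)
  show ?thesis using g
  proof (elim insertE emptyE)
    assume "gg = gs" thus ?thesis using F G lFG by (simp add: pp gs_def Lp_def Ap_def Lq_swap)
  next
    assume "gg = gn" thus ?thesis using F G by (simp add: pp gn_def Lp_def Ap_def Lq_negL Lq_negR Pl_neg)
  next
    assume "gg = gh" thus ?thesis using F G by (simp add: pp gh_def Lp_def Ap_def Lq_negz Pl_negz)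
  next
    assume "gg = gr" thus ?thesis using F G
      by (simp add: pp gr_def Lp_def Ap_def Lq_dagger[OF F G] Lq_dagger[OF F F] Lq_dagger[OF G G] Pl_dagger)
  qed
qed

lemma Gll_inv:
  assumes "t \<in> Gll" shows "p \<in> Pl l \<times> Pl l \<Longrightarrow> t p \<in> Pl l \<times> Pl l \<and> Lp (t p) = Lp p \<and> Ap (t p) = Ap p"
  using assms
proof (induction arbitrary: p rule: Gll.induct)
  case Gll_id thus ?case by simp
next
  case (Gll_s t) thus ?case using gen_inv[of "t p" l gs] by auto
next
  case (Gll_n t) thus ?case using gen_inv[of "t p" l gn] by auto
next
  case (Gll_h t) thus ?case using gen_inv[of "t p" l gh] by auto
next
  case (Gll_r t) thus ?case using gen_inv[of "t p" l gr] by auto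
qed


lemma psc_lim:
  assumes "(\<lambda>m. CDF (F m) (F m)) \<longlonglongrightarrow> x" "(\<lambda>m. CDF (G m) (G m)) \<longlonglongrightarrow> y" "(\<lambda>m. CDF (F m) (G m)) \<longlonglongrightarrow> z"
  shows "(\<lambda>m. PSC (F m) (G m)) \<longlonglongrightarrow> sqrt ((x - 1) * (y - 1)) + z"
  unfolding PSC_def ADF_def by (intro tendsto_intros assms)

theorem corollary3p5:
  fixes l :: nat and f g a b :: "nat \<Rightarrow> complex poly" and \<sigma> :: "nat \<Rightarrow> int"
    and t :: "complex poly \<times> complex poly \<Rightarrow> complex poly \<times> complex poly"
  assumes "f 0 \<in> Pl l" and "g 0 \<in> Pl l"
    and "t \<in> Gll"
    and "(a 0, b 0) = t (f 0, g 0)"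
    and "\<And>m. \<sigma> m \<in> {-1, 1}"
    and "\<And>m. f (Suc m) = step (\<sigma> m) (f m)"
    and "\<And>m. g (Suc m) = step (\<sigma> m) (g m)"
    and "\<And>m. a (Suc m) = step (\<sigma> m) (a m)"
    and "\<And>m. b (Suc m) = step (\<sigma> m) (b m)"
  shows "(\<exists>L. (\<lambda>m. CDF (a m) (b m)) \<longlonglongrightarrow> L \<and> (\<lambda>m. CDF (f m) (g m)) \<longlonglongrightarrow> L)
       \<and> (\<exists>L. (\<lambda>m. PSC (a m) (b m)) \<longlonglongrightarrow> L \<and> (\<lambda>m. PSC (f m) (g m)) \<longlonglongrightarrow> L)"
proof -
  have p0: "(f 0, g 0) \<in> Pl l \<times> Pl l" using assms(1,2) by simp
  have inv: "t (f 0, g 0) \<in> Pl l \<times> Pl l \<and> Lp (t (f 0, g 0)) = Lp (f 0, g 0) \<and> Ap (t (f 0, g 0)) = Ap (f 0, g 0)"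
    by (rule Gll_inv[OF assms(3) p0])
  hence a0: "a 0 \<in> Pl l" "b 0 \<in> Pl l" and Lab: "Lq (a 0) (b 0) = Lq (f 0) (g 0)"
    and Aab: "(Lq (a 0) (a 0) - 1) * (Lq (b 0) (b 0) - 1) = (Lq (f 0) (f 0) - 1) * (Lq (g 0) (g 0) - 1)"
    unfolding assms(4)[symmetric] by (auto simp: Lp_def Ap_def)
  note s = assms(5)
  have cfg: "(\<lambda>m. CDF (f m) (g m)) \<longlonglongrightarrow> Lq (f 0) (g 0)" by (rule conv[OF assms(1) assms(2) s assms(6) assms(7)])
  have cff: "(\<lambda>m. CDF (f m) (f m)) \<longlonglongrightarrow> Lq (f 0) (f 0)" by (rule conv[OF assms(1) assms(1) s assms(6) assms(6)])
  have cgg: "(\<lambda>m. CDF (g m) (g m)) \<longlonglongrightarrow> Lq (g 0) (g 0)" by (rule conv[OF assms(2) assms(2) s assms(7) assms(7)])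
  have cab: "(\<lambda>m. CDF (a m) (b m)) \<longlonglongrightarrow> Lq (a 0) (b 0)" by (rule conv[OF a0(1) a0(2) s assms(8) assms(9)])
  have caa: "(\<lambda>m. CDF (a m) (a m)) \<longlonglongrightarrow> Lq (a 0) (a 0)" by (rule conv[OF a0(1) a0(1) s assms(8) assms(8)])
  have cbb: "(\<lambda>m. CDF (b m) (b m)) \<longlonglongrightarrow> Lq (b 0) (b 0)" by (rule conv[OF a0(2) a0(2) s assms(9) assms(9)])
  have pfg: "(\<lambda>m. PSC (f m) (g m)) \<longlonglongrightarrow> sqrt ((Lq (f 0) (f 0) - 1) * (Lq (g 0) (g 0) - 1)) + Lq (f 0) (g 0)"
    by (rule psc_lim[OF cff cgg cfg])
  have pab: "(\<lambda>m. PSC (a m) (b m)) \<longlonglongrightarrow> sqrt ((Lq (f 0) (f 0) - 1) * (Lq (g 0) (g 0) - 1)) + Lq (f 0) (g 0)"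
    using psc_lim[OF caa cbb cab] unfolding Aab Lab .
  show ?thesis using cfg cab pfg pab unfolding Lab by blast
qed


end
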